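(* Let $A=KQ/I$ be a connected finite-dimensional quiver algebra of finite global dimension whose vertices are labelled $1,\dots,n$ so that the Cartan matrix $\phi_A$ is lower triangular. Let $\phi_A=\hat U_1 Q\hat U_2$ be a Bruhat decomposition of $\phi_A$. Then the Coxeter permutation $p_A$ of $A$ equals the row-permutation associated to the permutation matrix $Q$.
   Context: The Cartan matrix $\phi_A$ is the $n\times n$ integer matrix with entries $\phi_{i,j}=\dim_K e_jAe_i$ (the number of nonzero paths from $j$ to $i$ in a basis of paths). For finite global dimension, $\det\phi_A=\pm1$, and the Coxeter matrix is $C_A=-\phi_A^{T}\phi_A^{-1}$. A Bruhat decomposition of an invertible matrix $M$ (over $\mathbb{Q}$) is a factorisation $M=U_1PU_2$ with $U_1,U_2$ invertible upper triangular and $P$ a permutation matrix; $P$ is uniquely determined by $M$. For a permutation matrix $P$, the row-permutation $p_r$ is given by $p_r(i)=j$ if the nonzero entry of row $i$ of $P$ is in column $j$; the column-permutation $p_c$ is given by $p_c(i)=j$ if the nonzero entry of column $i$ is in row $j$. The Coxeter permutation $p_A$ is the column-permutation of the permutation matrix $P$ in a Bruhat decomposition $C_A=U_1PU_2$. *)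

theory Defs
  imports "Jordan_Normal_Form.Gauss_Jordan_Elimination" "Jordan_Normal_Form.Determinant"
begin

text \<open>A finite quiver has vertices 0..n-1 (the paper's 1..n, shifted by one), a finite
set of arrows of type 'a, and source/target maps.  A path is a pair (v, as): the starting
vertex v and the list of arrows in order of traversal; (v, []) is the trivial path e_v.\<close>

record 'a quiver =
  nverts :: nat
  arrows :: "'a set"
  src :: "'a \<Rightarrow> nat"
  tgt :: "'a \<Rightarrow> nat"

definition quiver :: "'a quiver \<Rightarrow> bool" where
  "quiver Q \<longleftrightarrow> finite (arrows Q) \<and>
     (\<forall>a\<in>arrows Q. src Q a < nverts Q \<and> tgt Q a < nverts Q)"

type_synonym 'a path = "nat \<times> 'a list"

fun valid_from :: "'a quiver \<Rightarrow> nat \<Rightarrow> 'a list \<Rightarrow> bool" where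
  "valid_from Q v [] \<longleftrightarrow> v < nverts Q"
| "valid_from Q v (a # as) \<longleftrightarrow> a \<in> arrows Q \<and> src Q a = v \<and> valid_from Q (tgt Q a) as"

definition valid_path :: "'a quiver \<Rightarrow> 'a path \<Rightarrow> bool" where
  "valid_path Q p \<longleftrightarrow> valid_from Q (fst p) (snd p)"

definition path_start :: "'a path \<Rightarrow> nat" where
  "path_start p = fst p"

definition path_end :: "'a quiver \<Rightarrow> 'a path \<Rightarrow> nat" where
  "path_end Q p = (if snd p = [] then fst p else tgt Q (last (snd p)))"

definition path_len :: "'a path \<Rightarrow> nat" where
  "path_len p = length (snd p)"

text \<open>Product of paths: p\<cdot>q is "first p, then q" when p ends where q starts, else 0.
With this convention e_j (KQ) e_i is spanned by the paths from j to i.\<close>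

definition composable :: "'a quiver \<Rightarrow> 'a path \<Rightarrow> 'a path \<Rightarrow> bool" where
  "composable Q p q \<longleftrightarrow> path_end Q p = path_start q"

definition path_cat :: "'a path \<Rightarrow> 'a path \<Rightarrow> 'a path" where
  "path_cat p q = (fst p, snd p @ snd q)"

text \<open>Elements of the path algebra KQ: finitely supported K-valued functions on valid paths
(coefficients with respect to the basis of paths).\<close>

definition supp :: "('b \<Rightarrow> 'k::zero) \<Rightarrow> 'b set" where
  "supp f = {p. f p \<noteq> 0}"

definition path_alg :: "'a quiver \<Rightarrow> ('a path \<Rightarrow> 'k::field) set" where
  "path_alg Q = {f. finite (supp f) \<and> (\<forall>p\<in>supp f. valid_path Q p)}"

definition pa_mult :: "'a quiver \<Rightarrow> ('a path \<Rightarrow> 'k::field) \<Rightarrow> ('a path \<Rightarrow> 'k) \<Rightarrow> ('a path \<Rightarrow> 'k)" where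
  "pa_mult Q f g = (\<lambda>r. \<Sum>p\<in>supp f. \<Sum>q\<in>supp g.
      (if composable Q p q \<and> path_cat p q = r then f p * g q else 0))"

definition pa_ideal :: "'a quiver \<Rightarrow> ('a path \<Rightarrow> 'k::field) set \<Rightarrow> bool" where
  "pa_ideal Q I \<longleftrightarrow> I \<subseteq> path_alg Q \<and> (\<lambda>_. 0) \<in> I \<and>
     (\<forall>f\<in>I. \<forall>g\<in>I. (\<lambda>p. f p + g p) \<in> I) \<and>
     (\<forall>f\<in>I. \<forall>g\<in>path_alg Q. pa_mult Q g f \<in> I \<and> pa_mult Q f g \<in> I)"

definition arrow_ideal_pow :: "'a quiver \<Rightarrow> nat \<Rightarrow> ('a path \<Rightarrow> 'k::field) set" where
  "arrow_ideal_pow Q k = {f \<in> path_alg Q. \<forall>p\<in>supp f. k \<le> path_len p}"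

definition admissible :: "'a quiver \<Rightarrow> ('a path \<Rightarrow> 'k::field) set \<Rightarrow> bool" where
  "admissible Q I \<longleftrightarrow> pa_ideal Q I \<and>
     (\<exists>m\<ge>2. arrow_ideal_pow Q m \<subseteq> I) \<and> I \<subseteq> arrow_ideal_pow Q 2"

definition connected_quiver :: "'a quiver \<Rightarrow> bool" where
  "connected_quiver Q \<longleftrightarrow> 0 < nverts Q \<and>
     (\<forall>i<nverts Q. \<forall>j<nverts Q.
        (i, j) \<in> ({(src Q a, tgt Q a) | a. a \<in> arrows Q} \<union>
                  {(tgt Q a, src Q a) | a. a \<in> arrows Q})\<^sup>*)"

text \<open>A set S of paths is linearly independent modulo I if no nontrivial K-linear
combination of its elements lies in I; i.e. the classes of S in A = KQ/I are linearly
independent.\<close>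

definition lin_indep_mod :: "'a quiver \<Rightarrow> ('a path \<Rightarrow> 'k::field) set \<Rightarrow> 'a path set \<Rightarrow> bool" where
  "lin_indep_mod Q I S \<longleftrightarrow>
     (\<forall>c :: 'a path \<Rightarrow> 'k. (\<lambda>p. if p \<in> S then c p else 0) \<in> I \<longrightarrow> (\<forall>p\<in>S. c p = 0))"

text \<open>dim_K e_j A e_i: since e_j A e_i is spanned by the classes of the paths from j to i,
its dimension is the maximal size of a finite set of such paths whose classes are
linearly independent (a basis of paths).\<close>

definition dim_eAe :: "'a quiver \<Rightarrow> ('a path \<Rightarrow> 'k::field) set \<Rightarrow> nat \<Rightarrow> nat \<Rightarrow> nat" where
  "dim_eAe Q I j i = Max {card S | S. finite S \<and>
       (\<forall>p\<in>S. valid_path Q p \<and> path_start p = j \<and> path_end Q p = i) \<and>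
       lin_indep_mod Q I S}"

definition cartan_mat :: "'a quiver \<Rightarrow> ('a path \<Rightarrow> 'k::field) set \<Rightarrow> int mat" where
  "cartan_mat Q I = mat (nverts Q) (nverts Q) (\<lambda>(i, j). int (dim_eAe Q I j i))"

definition lower_triangular :: "'b::zero mat \<Rightarrow> bool" where
  "lower_triangular M \<longleftrightarrow> (\<forall>i<dim_row M. \<forall>j<dim_col M. i < j \<longrightarrow> M $$ (i, j) = 0)"

definition coxeter_mat :: "'a quiver \<Rightarrow> ('a path \<Rightarrow> 'k::field) set \<Rightarrow> rat mat" where
  "coxeter_mat Q I = (let P = map_mat rat_of_int (cartan_mat Q I) in
      - (transpose_mat P * the (mat_inverse P)))"

definition permutation_mat :: "nat \<Rightarrow> 'b::{zero,one} mat \<Rightarrow> bool" where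
  "permutation_mat n P \<longleftrightarrow> P \<in> carrier_mat n n \<and>
     (\<exists>\<sigma>. \<sigma> permutes {..<n} \<and>
        (\<forall>i<n. \<forall>j<n. P $$ (i, j) = (if \<sigma> i = j then 1 else 0)))"

definition bruhat_decomp :: "nat \<Rightarrow> rat mat \<Rightarrow> rat mat \<Rightarrow> rat mat \<Rightarrow> rat mat \<Rightarrow> bool" where
  "bruhat_decomp n M U1 P U2 \<longleftrightarrow>
     U1 \<in> carrier_mat n n \<and> U2 \<in> carrier_mat n n \<and>
     invertible_mat U1 \<and> upper_triangular U1 \<and>
     invertible_mat U2 \<and> upper_triangular U2 \<and>
     permutation_mat n P \<and> M = U1 * P * U2"

definition row_perm :: "nat \<Rightarrow> 'b::zero mat \<Rightarrow> nat \<Rightarrow> nat" where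
  "row_perm n P i = (THE j. j < n \<and> P $$ (i, j) \<noteq> 0)"

definition col_perm :: "nat \<Rightarrow> 'b::zero mat \<Rightarrow> nat \<Rightarrow> nat" where
  "col_perm n P i = (THE j. j < n \<and> P $$ (j, i) \<noteq> 0)"

text \<open>Coxeter permutation: column permutation of the (unique) permutation matrix in a
Bruhat decomposition of C_A.\<close>

definition coxeter_perm :: "'a quiver \<Rightarrow> ('a path \<Rightarrow> 'k::field) set \<Rightarrow> nat \<Rightarrow> nat" where
  "coxeter_perm Q I = col_perm (nverts Q)
      (SOME P. \<exists>U1 U2. bruhat_decomp (nverts Q) (coxeter_mat Q I) U1 P U2)"

end

theory Submission imports Defs begin

lemma mult_entry: "A \<in> carrier_mat n n \<Longrightarrow> B \<in> carrier_mat n n \<Longrightarrow> i < n \<Longrightarrow> j < n \<Longrightarrow>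
  (A * B) $$ (i,j) = (\<Sum>k<n. A $$ (i,k) * B $$ (k,j))"
  by (simp add: scalar_prod_def lessThan_atLeast0)

lemma inv_ex: assumes "invertible_mat (U::'b::comm_ring_1 mat)" "U \<in> carrier_mat n n"
  shows "\<exists>B \<in> carrier_mat n n. U * B = 1\<^sub>m n \<and> B * U = 1\<^sub>m n"
proof -
  from assms obtain B where b: "U * B = 1\<^sub>m n" "B * U = 1\<^sub>m (dim_row B)"
    unfolding invertible_mat_def inverts_mat_def by auto
  have "dim_col B = n" using b(1) by (metis dim_col_mat(1) index_mult_mat(3) index_one_mat(3))
  moreover have "dim_row B = n" using b(2) assms(2)
    by (metis carrier_matD(2) index_mult_mat(3) index_one_mat(3))
  ultimately show ?thesis using b by (intro bexI[of _ B]) auto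
qed

lemma cancel_l: assumes "A * B = 1\<^sub>m n" "A \<in> carrier_mat n n" "B \<in> carrier_mat n n" "C \<in> carrier_mat n m"
  shows "A * (B * C) = (C :: 'b::comm_ring_1 mat)"
proof -
  have "A * (B * C) = (A * B) * C" by (rule assoc_mult_mat[symmetric, OF assms(2,3,4)])
  also have "\<dots> = C" unfolding assms(1) using assms(4) by simp
  finally show ?thesis .
qed

lemma assoc_n: "A \<in> carrier_mat n n \<Longrightarrow> B \<in> carrier_mat n n \<Longrightarrow> C \<in> carrier_mat n n \<Longrightarrow>
  A * B * C = A * (B * (C::'b::comm_ring_1 mat))" by (rule assoc_mult_mat)

lemma mult_n: "A \<in> carrier_mat n n \<Longrightarrow> B \<in> carrier_mat n n \<Longrightarrow> A * B \<in> carrier_mat n n"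
  by auto

lemma inv_mult: assumes "A \<in> carrier_mat n n" "B \<in> carrier_mat n n" "invertible_mat (A::'b::comm_ring_1 mat)" "invertible_mat B"
  shows "invertible_mat (A * B)"
proof -
  obtain Ai where Ai: "Ai \<in> carrier_mat n n" "A * Ai = 1\<^sub>m n" "Ai * A = 1\<^sub>m n" using inv_ex assms by blast
  obtain Bi where Bi: "Bi \<in> carrier_mat n n" "B * Bi = 1\<^sub>m n" "Bi * B = 1\<^sub>m n" using inv_ex assms by blast
  have 1: "A * B * (Bi * Ai) = 1\<^sub>m n" using Bi Ai assms by (simp add: assoc_n[of _ n] mult_n[of _ n] cancel_l[OF Bi(2), where m=n])
  have 2: "Bi * Ai * (A * B) = 1\<^sub>m n" using Bi Ai assms by (simp add: assoc_n[of _ n] mult_n[of _ n] cancel_l[OF Ai(3), where m=n])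
  show ?thesis unfolding invertible_mat_def inverts_mat_def using 1 2 assms Ai Bi by auto
qed

lemma upper_mult: assumes "upper_triangular A" "upper_triangular B" "A \<in> carrier_mat n n" "B \<in> carrier_mat n n"
  shows "upper_triangular (A * (B::'b::comm_ring_1 mat))"
  unfolding upper_triangular_def
proof (intro allI impI)
  fix i j assume ij: "i < dim_row (A * B)" "j < i"
  have "(A*B) $$ (i,j) = (\<Sum>k<n. A $$ (i,k) * B $$ (k,j))" using ij assms by (intro mult_entry) auto
  also have "\<dots> = 0"
  proof (intro sum.neutral ballI)
    fix k assume "k \<in> {..<n}"
    show "A $$ (i,k) * B $$ (k,j) = 0"
    proof (cases "k < i")
      case True hence "A $$ (i,k) = 0" using assms ij by (intro upper_triangularD[OF assms(1)]) auto
      thus ?thesis by simp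
    next
      case False hence "B $$ (k,j) = 0" using assms ij \<open>k \<in> {..<n}\<close> by (intro upper_triangularD[OF assms(2)]) auto
      thus ?thesis by simp
    qed
  qed
  finally show "(A*B) $$ (i,j) = 0" .
qed

lemma upper_diag: assumes "upper_triangular A" "A \<in> carrier_mat n n" "invertible_mat (A::'b::field mat)" "i < n"
  shows "A $$ (i,i) \<noteq> 0"
proof -
  obtain B where B: "B \<in> carrier_mat n n" "A * B = 1\<^sub>m n" using inv_ex assms by blast
  have "det A * det B = 1" using det_mult[OF assms(2) B(1)] B by simp
  hence "det A \<noteq> 0" by auto
  hence "prod_list (diag_mat A) \<noteq> 0" using det_upper_triangular[OF assms(1,2)] by simp
  thus ?thesis using assms(2,4) unfolding diag_mat_def by (auto simp: prod_list_zero_iff)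
qed

lemma upper_inv: assumes "upper_triangular U" "U \<in> carrier_mat n n" "\<forall>i<n. U $$ (i,i) \<noteq> 0"
  "X \<in> carrier_mat n n" "U * X = 1\<^sub>m n"
  shows "upper_triangular (X::'b::field mat)"
proof -
  have main: "\<forall>i. n - i = m \<longrightarrow> j < i \<longrightarrow> i < n \<longrightarrow> X $$ (i,j) = 0" if j: "j < n" for j m
  proof (induction m rule: less_induct)
    case (less m)
    show ?case
    proof (intro allI impI)
      fix i assume i: "n - i = m" "j < i" "i < n"
      have "0 = (U * X) $$ (i,j)" using assms i j by simp
      also have "\<dots> = (\<Sum>k<n. U $$ (i,k) * X $$ (k,j))" using assms i j by (intro mult_entry) auto
      also have "\<dots> = U $$ (i,i) * X $$ (i,j) + (\<Sum>k\<in>{..<n}-{i}. U $$ (i,k) * X $$ (k,j))"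
        using i by (subst sum.remove[of _ i]) auto
      also have "(\<Sum>k\<in>{..<n}-{i}. U $$ (i,k) * X $$ (k,j)) = 0"
      proof (intro sum.neutral ballI)
        fix k assume k: "k \<in> {..<n}-{i}"
        show "U $$ (i,k) * X $$ (k,j) = 0"
        proof (cases "k < i")
          case True thus ?thesis using assms i by auto
        next
          case False
          hence "X $$ (k,j) = 0" using less[of "n - k"] i k by auto
          thus ?thesis by simp
        qed
      qed
      finally show "X $$ (i,j) = 0" using assms(3) i by auto
    qed
  qed
  show ?thesis unfolding upper_triangular_def using main assms(4) by auto
qed


lemma perm_left: fixes P A :: "'b::comm_ring_1 mat" assumes "\<sigma> permutes {..<n}" "\<forall>i<n. \<forall>j<n. P $$ (i,j) = (if \<sigma> i = j then 1 else 0)"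
  "P \<in> carrier_mat n n" "A \<in> carrier_mat n n" "i < n" "j < n"
  shows "(P * A) $$ (i,j) = A $$ (\<sigma> i, (j::nat)) \<and> (\<sigma> i < n)"
proof -
  have si: "\<sigma> i < n" using assms(1,5) by (meson lessThan_iff permutes_in_image)
  have "(P * A) $$ (i,j) = (\<Sum>k<n. P $$ (i,k) * A $$ (k,j))" using assms by (intro mult_entry) auto
  also have "\<dots> = (\<Sum>k<n. (if \<sigma> i = k then A $$ (k,j) else 0))"
    using assms by (intro sum.cong) auto
  also have "\<dots> = A $$ (\<sigma> i, j)" using si by simp
  finally show ?thesis using si by simp
qed

lemma perm_right: assumes "\<sigma> permutes {..<n}" "\<forall>i<n. \<forall>j<n. P $$ (i,j) = (if \<sigma> i = j then 1 else 0)"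
  "P \<in> carrier_mat n n" "A \<in> carrier_mat n n" "i < n" 
  shows "(A * P) $$ (i,\<sigma> i) = (A $$ (i, i)::'b::comm_ring_1)"
proof -
  have si: "\<sigma> i < n" using assms(1,5) by (meson lessThan_iff permutes_in_image)
  have "(A * P) $$ (i,\<sigma> i) = (\<Sum>k<n. A $$ (i,k) * P $$ (k,\<sigma> i))" using assms si by (intro mult_entry) auto
  also have "\<dots> = (\<Sum>k<n. (if k = i then A $$ (i,k) else 0))"
    using assms si by (intro sum.cong) (auto simp: permutes_inj[THEN inj_eq])
  also have "\<dots> = A $$ (i, i)" using assms by simp
  finally show ?thesis .
qed

lemma perm_sum_le: fixes \<sigma> \<tau> :: "nat \<Rightarrow> nat" assumes "\<sigma> permutes {..<n}" "\<tau> permutes {..<n}" "\<forall>i<n. \<tau> i \<le> \<sigma> i"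
  shows "\<forall>i<n. \<tau> i = \<sigma> i"
proof (rule ccontr)
  assume "\<not> (\<forall>i<n. \<tau> i = \<sigma> i)"
  then obtain a where a: "a < n" "\<tau> a \<noteq> \<sigma> a" by blast
  have "\<tau> a \<le> \<sigma> a" using assms(3) a(1) by blast
  hence a2: "\<tau> a < \<sigma> a" using a(2) by linarith
  have "(\<Sum>i\<in>{..<n}. \<tau> i) < (\<Sum>i\<in>{..<n}. \<sigma> i)"
  proof (rule sum_strict_mono_ex1)
    show "finite {..<n}" by simp
    show "\<forall>x\<in>{..<n}. \<tau> x \<le> \<sigma> x" using assms(3) by blast
    show "\<exists>a\<in>{..<n}. \<tau> a < \<sigma> a" using a a2 by blast
  qed
  moreover have "(\<Sum>i\<in>{..<n}. i) = (\<Sum>i\<in>{..<n}. \<tau> i)"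
    using sum.permute[OF assms(2), of "\<lambda>i. i"] unfolding comp_def .
  moreover have "(\<Sum>i\<in>{..<n}. i) = (\<Sum>i\<in>{..<n}. \<sigma> i)"
    using sum.permute[OF assms(1), of "\<lambda>i. i"] unfolding comp_def .
  ultimately show False by linarith
qed

lemma bruhat_unique:
  assumes a: "bruhat_decomp n M A1 Pa A2" and b: "bruhat_decomp n M B1 Pb B2"
    and sa: "\<sigma>a permutes {..<n}" "\<forall>i<n. \<forall>j<n. Pa $$ (i,j) = (if \<sigma>a i = j then 1 else 0)"
    and sb: "\<sigma>b permutes {..<n}" "\<forall>i<n. \<forall>j<n. Pb $$ (i,j) = (if \<sigma>b i = j then 1 else 0)"
  shows "\<forall>i<n. \<sigma>a i = \<sigma>b i"
proof -
  have A: "A1 \<in> carrier_mat n n" "A2 \<in> carrier_mat n n" "invertible_mat A1" "upper_triangular A1"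
    "invertible_mat A2" "upper_triangular A2" "Pa \<in> carrier_mat n n" "M = A1 * Pa * A2"
    using a unfolding bruhat_decomp_def permutation_mat_def by blast+
  have B: "B1 \<in> carrier_mat n n" "B2 \<in> carrier_mat n n" "invertible_mat B1" "upper_triangular B1"
    "invertible_mat B2" "upper_triangular B2" "Pb \<in> carrier_mat n n" "M = B1 * Pb * B2"
    using b unfolding bruhat_decomp_def permutation_mat_def by blast+
  obtain B1i where B1i: "B1i \<in> carrier_mat n n" "B1 * B1i = 1\<^sub>m n" "B1i * B1 = 1\<^sub>m n"
    using inv_ex B(1,3) by blast
  obtain A2i where A2i: "A2i \<in> carrier_mat n n" "A2 * A2i = 1\<^sub>m n" "A2i * A2 = 1\<^sub>m n"
    using inv_ex A(2,5) by blast
  have ub1: "upper_triangular B1i"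
    using upper_inv[OF B(4,1) _ B1i(1,2)] upper_diag[OF B(4,1,3)] by blast
  have ua2: "upper_triangular A2i"
    using upper_inv[OF A(6,2) _ A2i(1,2)] upper_diag[OF A(6,2,5)] by blast
  define W where "W = B1i * A1"
  define W' where "W' = B2 * A2i"
  have Wc: "W \<in> carrier_mat n n" "W' \<in> carrier_mat n n" using W_def W'_def A B B1i A2i by auto
  have Wu: "upper_triangular W" "upper_triangular W'"
    using upper_mult[of B1i A1 n] upper_mult[of B2 A2i n] W_def W'_def A B B1i A2i ub1 ua2 by auto
  have Winv: "invertible_mat W"
  proof -
    have "invertible_mat B1i" unfolding invertible_mat_def inverts_mat_def using B1i B by auto
    thus ?thesis unfolding W_def using inv_mult[of B1i n A1] B1i A by auto
  qed
  have eq: "W * Pa = Pb * W'"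
  proof -
    have "B1i * (A1 * Pa * A2) * A2i = W * Pa"
      using A B1i A2i unfolding W_def by (simp add: assoc_n[of _ n] mult_n[of _ n])
    moreover have "B1i * (B1 * Pb * B2) * A2i = Pb * W'"
      using B B1i A2i unfolding W'_def by (simp add: assoc_n[of _ n] mult_n[of _ n] cancel_l[OF B1i(3), where m=n])
    ultimately show ?thesis using A B by simp
  qed
  have "\<forall>i<n. \<sigma>b i \<le> \<sigma>a i"
  proof (intro allI impI)
    fix i assume i: "i < n"
    have sai: "\<sigma>a i < n" using sa i by (meson lessThan_iff permutes_in_image)
    have "(W * Pa) $$ (i, \<sigma>a i) = W $$ (i,i)" using perm_right[OF sa] A Wc i by auto
    moreover have "(Pb * W') $$ (i, \<sigma>a i) = W' $$ (\<sigma>b i, \<sigma>a i) \<and> \<sigma>b i < n"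
      using perm_left[OF sb] B Wc i sai by auto
    moreover have "W $$ (i,i) \<noteq> 0" using upper_diag[OF Wu(1) Wc(1) Winv i] .
    ultimately have "W' $$ (\<sigma>b i, \<sigma>a i) \<noteq> 0" "\<sigma>b i < n" using eq by auto
    thus "\<sigma>b i \<le> \<sigma>a i" using upper_triangularD[OF Wu(2), of "\<sigma>a i" "\<sigma>b i"] Wc(2) by fastforce
  qed
  from perm_sum_le[OF sa(1) sb(1) this] show ?thesis by auto
qed


theorem mainTheorem3:
  fixes Q :: "'a quiver" and I :: "('a path \<Rightarrow> 'k::field) set"
    and U1 P U2 :: "rat mat"
  assumes "quiver Q"
    and "connected_quiver Q"
    and "admissible Q I"
    and "det (cartan_mat Q I) = 1 \<or> det (cartan_mat Q I) = -1"
    and "lower_triangular (cartan_mat Q I)"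
    and "bruhat_decomp (nverts Q) (map_mat rat_of_int (cartan_mat Q I)) U1 P U2"
  shows "\<forall>i < nverts Q. coxeter_perm Q I i = row_perm (nverts Q) P i"
proof -
  define n where "n = nverts Q"
  define F where "F = map_mat rat_of_int (cartan_mat Q I)"
  have Fc: "F \<in> carrier_mat n n" unfolding F_def n_def cartan_mat_def by simp
  have U: "U1 \<in> carrier_mat n n" "U2 \<in> carrier_mat n n" "invertible_mat U1" "upper_triangular U1"
    "invertible_mat U2" "upper_triangular U2" "P \<in> carrier_mat n n" "F = U1 * P * U2"
    using assms(6) unfolding bruhat_decomp_def permutation_mat_def n_def F_def by blast+
  obtain \<sigma> where sig: "\<sigma> permutes {..<n}" "\<forall>i<n. \<forall>j<n. P $$ (i,j) = (if \<sigma> i = j then 1 else 0)"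
    using assms(6) unfolding bruhat_decomp_def permutation_mat_def n_def by blast
  obtain U1i where U1i: "U1i \<in> carrier_mat n n" "U1 * U1i = 1\<^sub>m n" "U1i * U1 = 1\<^sub>m n"
    using inv_ex U(1,3) by blast
  obtain U2i where U2i: "U2i \<in> carrier_mat n n" "U2 * U2i = 1\<^sub>m n" "U2i * U2 = 1\<^sub>m n"
    using inv_ex U(2,5) by blast
  have uu1: "upper_triangular U1i"
    using upper_inv[OF U(4,1) _ U1i(1,2)] upper_diag[OF U(4,1,3)] by blast
  have uu2: "upper_triangular U2i"
    using upper_inv[OF U(6,2) _ U2i(1,2)] upper_diag[OF U(6,2,5)] by blast
  define PT where "PT = transpose_mat P"
  define \<tau> where "\<tau> = Hilbert_Choice.inv \<sigma>"
  have PTc: "PT \<in> carrier_mat n n" unfolding PT_def using U(7) by simp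
  have tau: "\<tau> permutes {..<n}" unfolding \<tau>_def using sig(1) by (rule permutes_inv)
  have PTe: "\<forall>i<n. \<forall>j<n. PT $$ (i,j) = (if \<tau> i = j then 1 else 0)"
  proof (intro allI impI)
    fix i j assume ij: "i < n" "j < n"
    have "PT $$ (i,j) = P $$ (j,i)" unfolding PT_def using U(7) ij by simp
    also have "\<dots> = (if \<sigma> j = i then 1 else 0)" using sig(2) ij by simp
    also have "\<dots> = (if \<tau> i = j then 1 else 0)" unfolding \<tau>_def using permutes_inv_eq[OF sig(1)] by metis
    finally show "PT $$ (i,j) = (if \<tau> i = j then 1 else 0)" .
  qed
  have PPT: "P * PT = 1\<^sub>m n"
  proof (rule eq_matI)
    fix i j assume "i < dim_row (1\<^sub>m n :: rat mat)" "j < dim_col (1\<^sub>m n :: rat mat)"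
    hence ij: "i < n" "j < n" by auto
    have "(P * PT) $$ (i,j) = PT $$ (\<sigma> i, j) \<and> \<sigma> i < n" using perm_left[OF sig U(7) PTc ij] .
    hence "(P * PT) $$ (i,j) = (if \<tau> (\<sigma> i) = j then 1 else 0)" using PTe ij by auto
    also have "\<tau> (\<sigma> i) = i" unfolding \<tau>_def using sig(1) by (simp add: permutes_inverses(2))
    finally show "(P * PT) $$ (i,j) = 1\<^sub>m n $$ (i,j)" using ij by simp
  qed (use U(7) PTc in auto)
  have PTP: "PT * P = 1\<^sub>m n"
  proof (rule eq_matI)
    fix i j assume "i < dim_row (1\<^sub>m n :: rat mat)" "j < dim_col (1\<^sub>m n :: rat mat)"
    hence ij: "i < n" "j < n" by auto
    have "(PT * P) $$ (i,j) = P $$ (\<tau> i, j) \<and> \<tau> i < n" using perm_left[OF tau PTe PTc U(7) ij] .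
    hence "(PT * P) $$ (i,j) = (if \<sigma> (\<tau> i) = j then 1 else 0)" using sig(2) ij by auto
    also have "\<sigma> (\<tau> i) = i" unfolding \<tau>_def using sig(1) by (simp add: permutes_inverses(1))
    finally show "(PT * P) $$ (i,j) = 1\<^sub>m n $$ (i,j)" using ij by simp
  qed (use U(7) PTc in auto)
  define Y where "Y = U2i * (PT * U1i)"
  have Yc: "Y \<in> carrier_mat n n" unfolding Y_def using U2i PTc U1i by auto
  have FY: "F * Y = 1\<^sub>m n" unfolding U(8) Y_def using U U1i U2i PTc
    by (simp add: assoc_n[of _ n] mult_n[of _ n] cancel_l[OF U2i(2), where m=n] cancel_l[OF PPT, where m=n])
  have YF: "Y * F = 1\<^sub>m n" unfolding U(8) Y_def using U U1i U2i PTc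
    by (simp add: assoc_n[of _ n] mult_n[of _ n] cancel_l[OF U1i(3), where m=n] cancel_l[OF PTP, where m=n])
  have "F \<in> Units (ring_mat TYPE(rat) n ())"
    unfolding Units_def ring_mat_simps using Fc Yc FY YF by auto
  then obtain X where X: "mat_inverse F = Some X"
    using mat_inverse(1)[OF Fc, of "()"] by (cases "mat_inverse F") auto
  have Xp: "F * X = 1\<^sub>m n" "X * F = 1\<^sub>m n" "X \<in> carrier_mat n n" using mat_inverse(2)[OF Fc X] by auto
  have XY: "X = Y"
  proof -
    have "X = X * (F * Y)" using FY Xp by simp
    also have "\<dots> = X * F * Y" using assoc_n[OF Xp(3) Fc Yc] by simp
    also have "\<dots> = Y" using Xp Yc by simp
    finally show ?thesis .
  qed
  define FT where "FT = transpose_mat F"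
  have FTc: "FT \<in> carrier_mat n n" unfolding FT_def using Fc by simp
  have FTu: "upper_triangular FT" unfolding upper_triangular_def
  proof (intro allI impI)
    fix i j assume ij: "i < dim_row FT" "j < i"
    hence "i < n" "j < n" using FTc by auto
    hence "FT $$ (i,j) = rat_of_int (cartan_mat Q I $$ (j,i))" unfolding FT_def F_def n_def cartan_mat_def by simp
    also have "cartan_mat Q I $$ (j,i) = 0" using assms(5) ij \<open>i < n\<close> \<open>j < n\<close>
      unfolding lower_triangular_def cartan_mat_def n_def by auto
    finally show "FT $$ (i,j) = 0" by simp
  qed
  define Up where "Up = - (FT * U2i)"
  have Upc: "Up \<in> carrier_mat n n" unfolding Up_def using FTc U2i by auto
  have Upu: "upper_triangular Up"
  proof -
    have u: "upper_triangular (FT * U2i)" using upper_mult[OF FTu uu2 FTc U2i(1)] .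
    show ?thesis unfolding upper_triangular_def Up_def
    proof (intro allI impI)
      fix i j assume ij: "i < dim_row (- (FT * U2i))" "j < i"
      hence "i < n" "j < n" using FTc by auto
      thus "(- (FT * U2i)) $$ (i,j) = 0" using upper_triangularD[OF u ij(2)] FTc U2i ij by simp
    qed
  qed
  have T1: "FT * transpose_mat X = 1\<^sub>m n"
    using transpose_mult[OF Xp(3) Fc] Xp(2) unfolding FT_def by simp
  have T2: "transpose_mat X * FT = 1\<^sub>m n"
    using transpose_mult[OF Fc Xp(3)] Xp(1) unfolding FT_def by simp
  have XTc: "transpose_mat X \<in> carrier_mat n n" using Xp(3) by simp
  have Upi: "invertible_mat Up"
  proof -
    define B where "B = - (U2 * transpose_mat X)"
    have "Up * B = 1\<^sub>m n" unfolding Up_def B_def using FTc U2i U XTc T1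
      by (simp add: assoc_n[of _ n] mult_n[of _ n] cancel_l[OF U2i(3), where m=n])
    moreover have "B * Up = 1\<^sub>m n" unfolding Up_def B_def using FTc U2i U XTc T1
      by (simp add: assoc_n[of _ n] mult_n[of _ n] cancel_l[OF T2, where m=n])
    moreover have "B \<in> carrier_mat n n" unfolding B_def using U XTc by auto
    ultimately show ?thesis unfolding invertible_mat_def inverts_mat_def using Upc
      by (metis carrier_matD(1) carrier_matD(2) square_mat.simps)
  qed
  have U1ii: "invertible_mat U1i" unfolding invertible_mat_def inverts_mat_def using U1i U by auto
  have cox: "coxeter_mat Q I = Up * PT * U1i"
  proof -
    have "coxeter_mat Q I = - (FT * the (mat_inverse F))" unfolding coxeter_mat_def Let_def FT_def F_def by simp
    also have "\<dots> = - (FT * X)" using X by simp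
    also have "\<dots> = Up * PT * U1i" unfolding XY Up_def Y_def using FTc U2i PTc U1i
      by (simp add: assoc_n[of _ n] mult_n[of _ n])
    finally show ?thesis .
  qed
  have PTperm: "permutation_mat n PT" unfolding permutation_mat_def using PTc tau PTe by blast
  have bd: "bruhat_decomp n (coxeter_mat Q I) Up PT U1i"
    unfolding bruhat_decomp_def using Upc U1i(1) Upi Upu U1ii uu1 PTperm cox by blast
  define P2 where "P2 = (SOME P. \<exists>U1 U2. bruhat_decomp n (coxeter_mat Q I) U1 P U2)"
  have "\<exists>V1 V2. bruhat_decomp n (coxeter_mat Q I) V1 P2 V2"
    unfolding P2_def by (rule someI_ex) (use bd in blast)
  then obtain V1 V2 where bd2: "bruhat_decomp n (coxeter_mat Q I) V1 P2 V2" by blast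
  then obtain \<rho> where rho: "\<rho> permutes {..<n}" "\<forall>i<n. \<forall>j<n. P2 $$ (i,j) = (if \<rho> i = j then 1 else 0)"
    unfolding bruhat_decomp_def permutation_mat_def by blast
  have tr: "\<forall>i<n. \<tau> i = \<rho> i" using bruhat_unique[OF bd bd2 tau PTe rho] .
  show ?thesis unfolding n_def[symmetric]
  proof (intro allI impI)
    fix i assume i: "i < n"
    have si: "\<sigma> i < n" using sig(1) i by (meson lessThan_iff permutes_in_image)
    have "row_perm n P i = \<sigma> i" unfolding row_perm_def
      by (rule the_equality) (use sig(2) i si in \<open>auto split: if_splits\<close>)
    moreover have "coxeter_perm Q I i = \<sigma> i" unfolding coxeter_perm_def n_def[symmetric] P2_def[symmetric] col_perm_def
    proof (rule the_equality)
      have "\<tau> (\<sigma> i) = i" unfolding \<tau>_def using sig(1) by (simp add: permutes_inverses(2))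
      hence "\<rho> (\<sigma> i) = i" using tr si by metis
      thus "\<sigma> i < n \<and> P2 $$ (\<sigma> i, i) \<noteq> 0" using rho(2) si i by simp
    next
      fix j assume j: "j < n \<and> P2 $$ (j, i) \<noteq> 0"
      hence "\<rho> j = i" using rho(2) i by (auto split: if_splits)
      hence "\<tau> j = i" using tr j by simp
      thus "j = \<sigma> i" unfolding \<tau>_def using permutes_inv_eq[OF sig(1)] by metis
    qed
    ultimately show "coxeter_perm Q I i = row_perm n P i" by simp
  qed
qed

end
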